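(* For any valid scheme (satisfying (C1)–(C8)), any database $n$, any message index $k$, and any $\mathcal{R}_U$, \[ 0\ \ge\ H\big(A_n^{[k,\mathcal{R}_U]}\mid Q_n^{[k,\mathcal{R}_U]},\mathcal{R}_U\big)-H(\mathcal{R}_S). \]
   Context: Model (SPIR with user-side common randomness). There are $N\ge1$ non-colluding databases, each storing the same $K\ge2$ messages $W_1,\dots,W_K$. Each message consists of $L$ i.i.d. symbols uniform over a sufficiently large finite field $\mathbb{F}_q$; entropies are in $q$-ary units, so $H(W_k)=L$ and $H(W_{1:K})=KL$. The databases share server-side common randomness $\mathcal{R}_S$, unknown to the user. The user holds user-side common randomness $\mathcal{R}_U$, a subset of the components of $\mathcal{R}_S$, unknown to the databases except for its size (uniform over subsets of given cardinality). $\mathcal{F}$ is the user's retrieval-strategy randomness. To retrieve $W_k$ the user sends $Q_n^{[k,\mathcal{R}_U]}$ to database $n$, receiving $A_n^{[k,\mathcal{R}_U]}$; $W_{\bar k}=\{W_j:j\ne k\}$. A valid scheme satisfies for all $k,n,\mathcal{R}_U$: (C1) $I(W_{1:K};k,\mathcal{F},\mathcal{R}_S,\mathcal{R}_U)=0$; (C2) $I(Q_{1:N}^{[k,\mathcal{R}_U]};W_{1:K},\mathcal{R}_S\setminus\mathcal{R}_U)=0$; (C3) $H(Q_{1:N}^{[k,\mathcal{R}_U]}\mid\mathcal{F})=0$; (C4) $H(A_n^{[k,\mathcal{R}_U]}\mid Q_n^{[k,\mathcal{R}_U]},W_{1:K},\mathcal{R}_S)=0$; (C5) $H(W_k\mid\mathcal{F},A_{1:N}^{[k,\mathcal{R}_U]},\mathcal{R}_U)=0$;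 (C6) user privacy: for all $k,k',n,\mathcal{R}_U$ there is $\mathcal{R}_U'$ with $H(\mathcal{R}_U')=H(\mathcal{R}_U)$ and $(Q_n^{[k,\mathcal{R}_U]},A_n^{[k,\mathcal{R}_U]},W_{1:K},\mathcal{R}_S)\sim(Q_n^{[k',\mathcal{R}_U']},A_n^{[k',\mathcal{R}_U']},W_{1:K},\mathcal{R}_S)$; (C7) $I(W_{\bar k};\mathcal{F},A_{1:N}^{[k,\mathcal{R}_U]},\mathcal{R}_U)=0$; (C8) $I(\mathcal{R}_S\setminus\mathcal{R}_U;\mathcal{F},A_{1:N}^{[k,\mathcal{R}_U]},W_k,\mathcal{R}_U)=0$. *)

theory Defs
  imports "HOL-Probability.Probability"
begin

definition Ent :: "'a measure \<Rightarrow> real \<Rightarrow> ('a \<Rightarrow> 'b) \<Rightarrow> real" where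
  "Ent M b X = prob_space.entropy M b (count_space (X ` space M)) X"

definition CEnt :: "'a measure \<Rightarrow> real \<Rightarrow> ('a \<Rightarrow> 'b) \<Rightarrow> ('a \<Rightarrow> 'c) \<Rightarrow> real" where
  "CEnt M b X Y = prob_space.conditional_entropy M b
     (count_space (X ` space M)) (count_space (Y ` space M)) X Y"

definition MI :: "'a measure \<Rightarrow> real \<Rightarrow> ('a \<Rightarrow> 'b) \<Rightarrow> ('a \<Rightarrow> 'c) \<Rightarrow> real" where
  "MI M b X Y = prob_space.mutual_information M b
     (count_space (X ` space M)) (count_space (Y ` space M)) X Y"

text \<open>Messages: W k \<omega> i is the i-th symbol (i < L) of message k (1 \<le> k \<le> K).\<close>

definition Wmsg :: "nat \<Rightarrow> (nat \<Rightarrow> 'a \<Rightarrow> nat \<Rightarrow> 'f) \<Rightarrow> nat \<Rightarrow> 'a \<Rightarrow> 'f list" where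
  "Wmsg L W k \<omega> = map (W k \<omega>) [0..<L]"

definition Wall :: "nat \<Rightarrow> nat \<Rightarrow> (nat \<Rightarrow> 'a \<Rightarrow> nat \<Rightarrow> 'f) \<Rightarrow> 'a \<Rightarrow> 'f list list" where
  "Wall K L W \<omega> = map (\<lambda>k. Wmsg L W k \<omega>) [1..<K+1]"

definition Wbar :: "nat \<Rightarrow> nat \<Rightarrow> (nat \<Rightarrow> 'a \<Rightarrow> nat \<Rightarrow> 'f) \<Rightarrow> nat \<Rightarrow> 'a \<Rightarrow> 'f list list" where
  "Wbar K L W k \<omega> = map (\<lambda>j. Wmsg L W j \<omega>) (filter (\<lambda>j. j \<noteq> k) [1..<K+1])"

text \<open>Common randomness: RS \<omega> i is component i \<in> I of R_S; the user-side
  randomness for the index set U \<subseteq> I is the restriction to U.\<close>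

definition RSub :: "'i set \<Rightarrow> ('a \<Rightarrow> 'i \<Rightarrow> 'r) \<Rightarrow> 'a \<Rightarrow> ('i \<Rightarrow> 'r)" where
  "RSub U RS \<omega> = restrict (RS \<omega>) U"

definition Qall :: "nat \<Rightarrow> (nat \<Rightarrow> nat \<Rightarrow> 'i set \<Rightarrow> 'a \<Rightarrow> 'q) \<Rightarrow> nat \<Rightarrow> 'i set \<Rightarrow> 'a \<Rightarrow> 'q list" where
  "Qall N Q k U \<omega> = map (\<lambda>n. Q n k U \<omega>) [1..<N+1]"

definition admissible_RU :: "'i set \<Rightarrow> nat \<Rightarrow> 'i set \<Rightarrow> bool" where
  "admissible_RU I m U \<longleftrightarrow> U \<subseteq> I \<and> card U = m"

text \<open>Conditions (C1)-(C8), entropies in q-ary units, q = CARD('f).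
  Q n k U / A n k U are the query/answer for database n, desired message k and
  user-side randomness R_U = components U of R_S.\<close>

definition valid_scheme ::
  "'a measure \<Rightarrow> nat \<Rightarrow> nat \<Rightarrow> nat \<Rightarrow> 'i set \<Rightarrow> nat \<Rightarrow>
   (nat \<Rightarrow> 'a \<Rightarrow> nat \<Rightarrow> 'f::{finite,field}) \<Rightarrow> ('a \<Rightarrow> 'i \<Rightarrow> 'r) \<Rightarrow> ('a \<Rightarrow> 'u) \<Rightarrow>
   (nat \<Rightarrow> nat \<Rightarrow> 'i set \<Rightarrow> 'a \<Rightarrow> 'q) \<Rightarrow> (nat \<Rightarrow> nat \<Rightarrow> 'i set \<Rightarrow> 'a \<Rightarrow> 'ans) \<Rightarrow> bool" where
  "valid_scheme M N K L I m W RS F Q A \<longleftrightarrow>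
    (let b = real CARD('f) in
     \<forall>k\<in>{1..K}. \<forall>U. admissible_RU I m U \<longrightarrow>
       \<comment> \<open>C1\<close>
       MI M b (Wall K L W) (\<lambda>\<omega>. (F \<omega>, RSub I RS \<omega>, RSub U RS \<omega>)) = 0 \<and>
       \<comment> \<open>C2\<close>
       MI M b (Qall N Q k U) (\<lambda>\<omega>. (Wall K L W \<omega>, RSub (I - U) RS \<omega>)) = 0 \<and>
       \<comment> \<open>C3\<close>
       CEnt M b (Qall N Q k U) F = 0 \<and>
       \<comment> \<open>C4\<close>
       (\<forall>n\<in>{1..N}. CEnt M b (A n k U) (\<lambda>\<omega>. (Q n k U \<omega>, Wall K L W \<omega>, RSub I RS \<omega>)) = 0) \<and>
       \<comment> \<open>C5\<close>
       CEnt M b (Wmsg L W k) (\<lambda>\<omega>. (F \<omega>, Qall N A k U \<omega>, RSub U RS \<omega>)) = 0 \<and>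
       \<comment> \<open>C6\<close>
       (\<forall>k'\<in>{1..K}. \<forall>n\<in>{1..N}. \<exists>U'. admissible_RU I m U' \<and>
          Ent M b (RSub U' RS) = Ent M b (RSub U RS) \<and>
          distr M (count_space UNIV) (\<lambda>\<omega>. (Q n k U \<omega>, A n k U \<omega>, Wall K L W \<omega>, RSub I RS \<omega>)) =
          distr M (count_space UNIV) (\<lambda>\<omega>. (Q n k' U' \<omega>, A n k' U' \<omega>, Wall K L W \<omega>, RSub I RS \<omega>))) \<and>
       \<comment> \<open>C7\<close>
       MI M b (Wbar K L W k) (\<lambda>\<omega>. (F \<omega>, Qall N A k U \<omega>, RSub U RS \<omega>)) = 0 \<and>
       \<comment> \<open>C8\<close>
       MI M b (RSub (I - U) RS) (\<lambda>\<omega>. (F \<omega>, Qall N A k U \<omega>, Wmsg L W k \<omega>, RSub U RS \<omega>)) = 0)"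

end

theory Submission imports Defs begin

locale fin_info = information_space +
  assumes finS: "finite (space M)" and powS: "sets M = Pow (space M)"
begin

lemma sf[simp, intro]: "simple_function M X"
  using finS powS by (auto simp: simple_function_def)

lemma ent_formula: "\<H>(X) = - (\<Sum>x\<in>X`space M. prob (X -` {x} \<inter> space M) * log b (prob (X -` {x} \<inter> space M)))"
  by (rule entropy_simple_distributed[OF simple_distributedI[OF sf measure_nonneg refl]])

lemma ent_cong: assumes "\<And>\<omega>. \<omega> \<in> space M \<Longrightarrow> X \<omega> = Y \<omega>" shows "\<H>(X) = \<H>(Y)"
proof -
  have i: "X ` space M = Y ` space M" using assms by auto
  have p: "\<And>x. X -` {x} \<inter> space M = Y -` {x} \<inter> space M" using assms by auto
  have "\<H>(X) = - (\<Sum>x\<in>X`space M. prob (X -` {x} \<inter> space M) * log b (prob (X -` {x} \<inter> space M)))"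
    by (rule ent_formula)
  also have "\<dots> = - (\<Sum>x\<in>Y`space M. prob (Y -` {x} \<inter> space M) * log b (prob (Y -` {x} \<inter> space M)))"
    unfolding i p ..
  also have "\<dots> = \<H>(Y)" by (rule ent_formula[symmetric])
  finally show ?thesis .
qed

lemma ent_le: assumes "\<And>\<omega> \<omega>'. \<omega> \<in> space M \<Longrightarrow> \<omega>' \<in> space M \<Longrightarrow> Y \<omega> = Y \<omega>' \<Longrightarrow> X \<omega> = X \<omega>'"
  shows "\<H>(X) \<le> \<H>(Y)"
proof -
  define g where "g y = X (SOME \<omega>. \<omega> \<in> space M \<and> Y \<omega> = y)" for y
  have "\<And>\<omega>. \<omega> \<in> space M \<Longrightarrow> X \<omega> = (g \<circ> Y) \<omega>"
  proof -
    fix \<omega> assume w: "\<omega> \<in> space M"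
    then have "\<exists>\<omega>'. \<omega>' \<in> space M \<and> Y \<omega>' = Y \<omega>" by blast
    then have "(SOME \<omega>'. \<omega>' \<in> space M \<and> Y \<omega>' = Y \<omega>) \<in> space M \<and> Y (SOME \<omega>'. \<omega>' \<in> space M \<and> Y \<omega>' = Y \<omega>) = Y \<omega>"
      by (rule someI_ex)
    then show "X \<omega> = (g \<circ> Y) \<omega>" using assms[OF w] by (auto simp: g_def)
  qed
  then have "\<H>(X) = \<H>(g \<circ> Y)" by (rule ent_cong)
  also have "\<dots> \<le> \<H>(Y)" by (rule entropy_data_processing) simp
  finally show ?thesis .
qed

lemma ent_eq: assumes "\<And>\<omega> \<omega>'. \<omega> \<in> space M \<Longrightarrow> \<omega>' \<in> space M \<Longrightarrow> Y \<omega> = Y \<omega>' \<longleftrightarrow> X \<omega> = X \<omega>'"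
  shows "\<H>(X) = \<H>(Y)"
  using ent_le[of Y X] ent_le[of X Y] assms by force

lemma ent_super: assumes "finite A" "X ` space M \<subseteq> A"
  shows "entropy b (count_space A) X = \<H>(X)"
proof -
  let ?p = "\<lambda>x. prob (X -` {x} \<inter> space M)"
  let ?P = "\<lambda>x. if x \<in> X`space M then ?p x else 0"
  have D: "distributed M (count_space A) X ?P"
    by (rule distributed_simple_function_superset[OF sf _ assms(2,1)]) simp
  have "entropy b (count_space A) X = - (\<integral>x. ?P x * log b (?P x) \<partial>count_space A)"
    by (rule entropy_distr[OF D]) (auto simp: measure_nonneg)
  also have "\<dots> = - (\<Sum>x\<in>A. ?P x * log b (?P x))"
    using assms by (simp add: lebesgue_integral_count_space_finite)
  also have "(\<Sum>x\<in>A. ?P x * log b (?P x)) = (\<Sum>x\<in>X`space M. ?P x * log b (?P x))"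
    using assms by (intro sum.mono_neutral_right) auto
  also have "\<dots> = (\<Sum>x\<in>X`space M. ?p x * log b (?p x))" by (rule sum.cong) auto
  finally show ?thesis by (simp add: ent_formula)
qed

lemma MI_super: assumes "finite A" "X ` space M \<subseteq> A" "finite B" "Y ` space M \<subseteq> B"
  shows "mutual_information b (count_space A) (count_space B) X Y = \<H>(X) + \<H>(Y) - \<H>(\<lambda>\<omega>. (X \<omega>, Y \<omega>))"
proof -
  let ?Px = "\<lambda>x. if x \<in> X`space M then prob (X -` {x} \<inter> space M) else 0"
  let ?Py = "\<lambda>x. if x \<in> Y`space M then prob (Y -` {x} \<inter> space M) else 0"
  let ?XY = "\<lambda>\<omega>. (X \<omega>, Y \<omega>)"
  let ?Pxy = "\<lambda>x. if x \<in> ?XY`space M then prob (?XY -` {x} \<inter> space M) else 0"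
  have PM: "count_space A \<Otimes>\<^sub>M count_space B = count_space (A \<times> B)"
    using assms by (simp add: pair_measure_count_space)
  have Dx: "distributed M (count_space A) X ?Px"
    by (rule distributed_simple_function_superset[OF sf _ assms(2,1)]) simp
  have Dy: "distributed M (count_space B) Y ?Py"
    by (rule distributed_simple_function_superset[OF sf _ assms(4,3)]) simp
  have sub: "?XY ` space M \<subseteq> A \<times> B" using assms by auto
  have Dxy: "distributed M (count_space A \<Otimes>\<^sub>M count_space B) ?XY ?Pxy"
    unfolding PM
    by (rule distributed_simple_function_superset[OF sf _ sub]) (use assms in simp_all)
  have "mutual_information b (count_space A) (count_space B) X Y =
     entropy b (count_space A) X + entropy b (count_space B) Y - entropy b (count_space A \<Otimes>\<^sub>M count_space B) ?XY"
    by (rule mutual_information_eq_entropy_conditional_entropy_distr[OF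
          sigma_finite_measure_count_space_finite sigma_finite_measure_count_space_finite Dx _ Dy _ Dxy])
       (use assms in \<open>auto simp: PM measure_nonneg intro!: integrable_count_space\<close>)
  also have "\<dots> = \<H>(X) + \<H>(Y) - \<H>(?XY)"
    unfolding PM using assms sub by (simp add: ent_super)
  finally show ?thesis .
qed

lemma MI_h: "\<I>(X;Y) = \<H>(X) + \<H>(Y) - \<H>(\<lambda>\<omega>. (X \<omega>, Y \<omega>))"
  by (rule MI_super) (use finS in auto)

lemma CE_h: "\<H>(X | Y) = \<H>(\<lambda>\<omega>. (X \<omega>, Y \<omega>)) - \<H>(Y)"
proof -
  have "\<H>(\<lambda>\<omega>. (Y \<omega>, X \<omega>)) = \<H>(Y) + \<H>(X|Y)" by (rule entropy_chain_rule) auto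
  moreover have "\<H>(\<lambda>\<omega>. (Y \<omega>, X \<omega>)) = \<H>(\<lambda>\<omega>. (X \<omega>, Y \<omega>))" by (rule ent_eq) auto
  ultimately show ?thesis by simp
qed

lemma submod: "\<H>(\<lambda>\<omega>. (X \<omega>, Y \<omega>, Z \<omega>)) + \<H>(Z) \<le> \<H>(\<lambda>\<omega>. (X \<omega>, Z \<omega>)) + \<H>(\<lambda>\<omega>. (Y \<omega>, Z \<omega>))"
proof -
  have "0 \<le> \<I>(X ; Y | Z)" by (rule conditional_mutual_information_nonneg) auto
  moreover have PM: "count_space (Y ` space M) \<Otimes>\<^sub>M count_space (Z ` space M) = count_space (Y ` space M \<times> Z ` space M)"
    using finS by (simp add: pair_measure_count_space)
  have "mutual_information b (count_space (X ` space M)) (count_space (Y ` space M \<times> Z ` space M)) X (\<lambda>\<omega>. (Y \<omega>, Z \<omega>))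
     = \<H>(X) + \<H>(\<lambda>\<omega>. (Y \<omega>, Z \<omega>)) - \<H>(\<lambda>\<omega>. (X \<omega>, Y \<omega>, Z \<omega>))"
    by (rule MI_super) (use finS in auto)
  ultimately show ?thesis unfolding conditional_mutual_information_def PM MI_h by simp
qed

lemma subadd: "\<H>(\<lambda>\<omega>. (X \<omega>, Y \<omega>)) \<le> \<H>(X) + \<H>(Y)"
  using mutual_information_nonneg_simple[of X Y] MI_h[of X Y] by simp

lemma mono: "\<H>(Y) \<le> \<H>(\<lambda>\<omega>. (X \<omega>, Y \<omega>))"
  by (rule ent_le) auto

lemma det_cond: assumes "\<H>(\<lambda>\<omega>. (D \<omega>, C \<omega>)) = \<H>(C)"
  shows "\<H>(\<lambda>\<omega>. (Y \<omega>, D \<omega>, C \<omega>)) = \<H>(\<lambda>\<omega>. (Y \<omega>, C \<omega>))"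
proof (rule antisym)
  show "\<H>(\<lambda>\<omega>. (Y \<omega>, D \<omega>, C \<omega>)) \<le> \<H>(\<lambda>\<omega>. (Y \<omega>, C \<omega>))"
    using submod[of Y D C] assms by simp
  show "\<H>(\<lambda>\<omega>. (Y \<omega>, C \<omega>)) \<le> \<H>(\<lambda>\<omega>. (Y \<omega>, D \<omega>, C \<omega>))" by (rule ent_le) auto
qed

lemma condmono: assumes "\<And>\<omega> \<omega>'. \<omega> \<in> space M \<Longrightarrow> \<omega>' \<in> space M \<Longrightarrow> Z \<omega> = Z \<omega>' \<Longrightarrow> V \<omega> = V \<omega>'"
  shows "\<H>(\<lambda>\<omega>. (Y \<omega>, Z \<omega>)) - \<H>(Z) \<le> \<H>(\<lambda>\<omega>. (Y \<omega>, V \<omega>)) - \<H>(V)"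
proof -
  have "\<H>(\<lambda>\<omega>. (Y \<omega>, Z \<omega>, V \<omega>)) = \<H>(\<lambda>\<omega>. (Y \<omega>, Z \<omega>))" by (rule ent_eq) (use assms in blast)
  moreover have "\<H>(\<lambda>\<omega>. (Z \<omega>, V \<omega>)) = \<H>(Z)" by (rule ent_eq) (use assms in blast)
  ultimately show ?thesis using submod[of Y Z V] by simp
qed

lemma ent_by_P: assumes "\<And>x. prob (X -` {x} \<inter> space M) = P x"
  shows "\<H>(X) = - (\<Sum>x\<in>{x. P x \<noteq> 0}. P x * log b (P x))"
proof -
  have sub: "{x. P x \<noteq> 0} \<subseteq> X ` space M"
  proof
    fix x assume "x \<in> {x. P x \<noteq> 0}"
    then have "X -` {x} \<inter> space M \<noteq> {}" using assms[of x] by auto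
    then show "x \<in> X ` space M" by auto
  qed
  have fin: "finite (X ` space M)" using finS by auto
  have "\<H>(X) = - (\<Sum>x\<in>X`space M. P x * log b (P x))" unfolding ent_formula assms ..
  also have "(\<Sum>x\<in>X`space M. P x * log b (P x)) = (\<Sum>x\<in>{x. P x \<noteq> 0}. P x * log b (P x))"
    using sub fin by (intro sum.mono_neutral_right) auto
  finally show ?thesis .
qed

lemma meas_all: "T \<in> measurable M (count_space UNIV)"
  using powS by (auto simp: measurable_def)

lemma transfer: assumes "distr M (count_space UNIV) T = distr M (count_space UNIV) T'"
  shows "\<H>(\<lambda>\<omega>. f (T \<omega>)) = \<H>(\<lambda>\<omega>. f (T' \<omega>))"
proof -
  define P where "P x = measure (distr M (count_space UNIV) T) (f -` {x})" for x
  have "\<And>x. prob ((\<lambda>\<omega>. f (T \<omega>)) -` {x} \<inter> space M) = P x"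
    unfolding P_def by (subst measure_distr[OF meas_all]) (auto intro!: arg_cong[where f=prob])
  moreover have "\<And>x. prob ((\<lambda>\<omega>. f (T' \<omega>)) -` {x} \<inter> space M) = P x"
    unfolding P_def assms by (subst measure_distr[OF meas_all]) (auto intro!: arg_cong[where f=prob])
  ultimately show ?thesis by (simp add: ent_by_P)
qed

lemma MI_mono:
  assumes dV: "\<And>\<omega> \<omega>'. \<omega> \<in> space M \<Longrightarrow> \<omega>' \<in> space M \<Longrightarrow> V' \<omega> = V' \<omega>' \<Longrightarrow> V \<omega> = V \<omega>'"
    and dY: "\<And>\<omega> \<omega>'. \<omega> \<in> space M \<Longrightarrow> \<omega>' \<in> space M \<Longrightarrow> Y' \<omega> = Y' \<omega>' \<Longrightarrow> Y \<omega> = Y \<omega>'"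
  shows "\<H>(Y) + \<H>(V) - \<H>(\<lambda>\<omega>. (Y \<omega>, V \<omega>)) \<le> \<H>(Y') + \<H>(V') - \<H>(\<lambda>\<omega>. (Y' \<omega>, V' \<omega>))"
proof -
  have 1: "\<H>(\<lambda>\<omega>. (Y \<omega>, V' \<omega>)) - \<H>(V') \<le> \<H>(\<lambda>\<omega>. (Y \<omega>, V \<omega>)) - \<H>(V)"
    by (rule condmono) (rule dV)
  have 2: "\<H>(\<lambda>\<omega>. (V' \<omega>, Y' \<omega>)) - \<H>(Y') \<le> \<H>(\<lambda>\<omega>. (V' \<omega>, Y \<omega>)) - \<H>(Y)"
    by (rule condmono) (rule dY)
  have 3: "\<H>(\<lambda>\<omega>. (V' \<omega>, Y' \<omega>)) = \<H>(\<lambda>\<omega>. (Y' \<omega>, V' \<omega>))" by (rule ent_eq) auto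
  have 4: "\<H>(\<lambda>\<omega>. (V' \<omega>, Y \<omega>)) = \<H>(\<lambda>\<omega>. (Y \<omega>, V' \<omega>))" by (rule ent_eq) auto
  show ?thesis using 1 2 3 4 by simp
qed

end

lemma restrict_sub: "restrict f I = restrict g I \<Longrightarrow> U \<subseteq> I \<Longrightarrow> restrict f U = restrict g U"
  by (auto simp: fun_eq_iff restrict_def) (metis subsetD)

lemma depRU: "RSub I RS \<omega> = RSub I RS \<omega>' \<Longrightarrow> U \<subseteq> I \<Longrightarrow> RSub U RS \<omega> = RSub U RS \<omega>'"
  unfolding RSub_def by (rule restrict_sub)

lemma depQall: assumes "Qall N X k U \<omega> = Qall N X k U \<omega>'" "n \<in> {1..N}" shows "X n k U \<omega> = X n k U \<omega>'"
proof -
  have "n \<in> set [1..<N+1]" using assms(2) by (simp del: upt_Suc)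
  then show ?thesis using assms(1) unfolding Qall_def map_eq_conv by blast
qed

lemma Wk_nth: "k \<in> {1..K} \<Longrightarrow> Wmsg L W k \<omega> = Wall K L W \<omega> ! (k - 1)"
  unfolding Wall_def by (subst nth_map) (auto simp del: upt_Suc simp: nth_upt)

lemma depWk: assumes "Wall K L W \<omega> = Wall K L W \<omega>'" "k \<in> {1..K}" shows "Wmsg L W k \<omega> = Wmsg L W k \<omega>'"
proof -
  have "k \<in> set [1..<K+1]" using assms(2) by (simp del: upt_Suc)
  then show ?thesis using assms(1) unfolding Wall_def map_eq_conv by blast
qed

lemma depWb: "Wall K L W \<omega> = Wall K L W \<omega>' \<Longrightarrow> Wbar K L W k \<omega> = Wbar K L W k \<omega>'"
  unfolding Wall_def Wbar_def map_eq_conv by auto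

lemma depWbk: "Wbar K L W k' \<omega> = Wbar K L W k' \<omega>' \<Longrightarrow> k \<noteq> k' \<Longrightarrow> k \<in> {1..K} \<Longrightarrow> Wmsg L W k \<omega> = Wmsg L W k \<omega>'"
  unfolding Wbar_def map_eq_conv by auto

lemma recon: "Wmsg L W k \<omega> = Wmsg L W k \<omega>' \<Longrightarrow> Wbar K L W k \<omega> = Wbar K L W k \<omega>' \<Longrightarrow> Wall K L W \<omega> = Wall K L W \<omega>'"
  unfolding Wall_def Wbar_def map_eq_conv by auto

theorem mainTheorem13:
  fixes M :: "'a measure" and N K L m :: nat and I :: "'i set"
    and W :: "nat \<Rightarrow> 'a \<Rightarrow> nat \<Rightarrow> 'f::{finite,field}"
    and RS :: "'a \<Rightarrow> 'i \<Rightarrow> 'r" and F :: "'a \<Rightarrow> 'u"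
    and Q :: "nat \<Rightarrow> nat \<Rightarrow> 'i set \<Rightarrow> 'a \<Rightarrow> 'q"
    and A :: "nat \<Rightarrow> nat \<Rightarrow> 'i set \<Rightarrow> 'a \<Rightarrow> 'ans"
  assumes "prob_space M" and "finite (space M)" and "sets M = Pow (space M)"
    and "N \<ge> 1" and "K \<ge> 2" and "finite I" and "m \<le> card I"
    and "\<forall>w. length w = K \<and> (\<forall>x\<in>set w. length x = L) \<longrightarrow>
           measure M {\<omega> \<in> space M. Wall K L W \<omega> = w} = 1 / real CARD('f) ^ (K * L)"
    and "valid_scheme M N K L I m W RS F Q A"
    and "n \<in> {1..N}" and "k \<in> {1..K}" and "admissible_RU I m U"
  shows "0 \<ge> CEnt M (real CARD('f)) (A n k U) (\<lambda>\<omega>. (Q n k U \<omega>, RSub U RS \<omega>))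
              - Ent M (real CARD('f)) (RSub I RS)"
proof -
  let ?b = "real CARD('f)"
  have "card {0::'f, 1} \<le> card (UNIV :: 'f set)" by (rule card_mono) auto
  then have b1: "1 < ?b" by simp
  interpret fin_info M ?b
    by (intro fin_info.intro information_space.intro fin_info_axioms.intro information_space_axioms.intro)
       (use assms b1 in auto)
  have VS0: "\<forall>k\<in>{1..K}. \<forall>U. admissible_RU I m U \<longrightarrow>
       (MI M ?b (Wall K L W) (\<lambda>\<omega>. (F \<omega>, RSub I RS \<omega>, RSub U RS \<omega>)) = 0 \<and>
       MI M ?b (Qall N Q k U) (\<lambda>\<omega>. (Wall K L W \<omega>, RSub (I - U) RS \<omega>)) = 0 \<and>
       CEnt M ?b (Qall N Q k U) F = 0 \<and>
       (\<forall>n\<in>{1..N}. CEnt M ?b (A n k U) (\<lambda>\<omega>. (Q n k U \<omega>, Wall K L W \<omega>, RSub I RS \<omega>)) = 0) \<and>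
       CEnt M ?b (Wmsg L W k) (\<lambda>\<omega>. (F \<omega>, Qall N A k U \<omega>, RSub U RS \<omega>)) = 0 \<and>
       (\<forall>k'\<in>{1..K}. \<forall>n\<in>{1..N}. \<exists>U'. admissible_RU I m U' \<and>
          Ent M ?b (RSub U' RS) = Ent M ?b (RSub U RS) \<and>
          distr M (count_space UNIV) (\<lambda>\<omega>. (Q n k U \<omega>, A n k U \<omega>, Wall K L W \<omega>, RSub I RS \<omega>)) =
          distr M (count_space UNIV) (\<lambda>\<omega>. (Q n k' U' \<omega>, A n k' U' \<omega>, Wall K L W \<omega>, RSub I RS \<omega>))) \<and>
       MI M ?b (Wbar K L W k) (\<lambda>\<omega>. (F \<omega>, Qall N A k U \<omega>, RSub U RS \<omega>)) = 0 \<and>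
       MI M ?b (RSub (I - U) RS) (\<lambda>\<omega>. (F \<omega>, Qall N A k U \<omega>, Wmsg L W k \<omega>, RSub U RS \<omega>)) = 0)"
    using assms(9) unfolding valid_scheme_def Let_def .
  have kK: "k \<in> {1..K}" and nN: "n \<in> {1..N}" and UU: "admissible_RU I m U" using assms by auto
  have UI: "U \<subseteq> I" using UU by (simp add: admissible_RU_def)
  note V = mp[OF spec[OF bspec[OF VS0 kK]] UU]
  have C3: "CEnt M ?b (Qall N Q k U) F = 0" by (rule V[THEN conjunct2, THEN conjunct2, THEN conjunct1])
  have C4: "CEnt M ?b (A n k U) (\<lambda>\<omega>. (Q n k U \<omega>, Wall K L W \<omega>, RSub I RS \<omega>)) = 0" by (rule bspec[OF V[THEN conjunct2, THEN conjunct2, THEN conjunct2, THEN conjunct1] nN])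
  have C5: "CEnt M ?b (Wmsg L W k) (\<lambda>\<omega>. (F \<omega>, Qall N A k U \<omega>, RSub U RS \<omega>)) = 0" by (rule V[THEN conjunct2, THEN conjunct2, THEN conjunct2, THEN conjunct2, THEN conjunct1])
  have C7: "MI M ?b (Wbar K L W k) (\<lambda>\<omega>. (F \<omega>, Qall N A k U \<omega>, RSub U RS \<omega>)) = 0" by (rule V[THEN conjunct2, THEN conjunct2, THEN conjunct2, THEN conjunct2, THEN conjunct2, THEN conjunct2, THEN conjunct1])
  define k' where "k' = (if k = 1 then 2 else (1::nat))"
  have k'K: "k' \<in> {1..K}" and kk': "k \<noteq> k'" using assms(5) kK by (auto simp: k'_def)
  obtain U' where UU': "admissible_RU I m U'" and
    C6: "distr M (count_space UNIV) (\<lambda>\<omega>. (Q n k U \<omega>, A n k U \<omega>, Wall K L W \<omega>, RSub I RS \<omega>)) =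
          distr M (count_space UNIV) (\<lambda>\<omega>. (Q n k' U' \<omega>, A n k' U' \<omega>, Wall K L W \<omega>, RSub I RS \<omega>))"
    using bspec[OF bspec[OF V[THEN conjunct2, THEN conjunct2, THEN conjunct2, THEN conjunct2, THEN conjunct2, THEN conjunct1] k'K] nN] by blast
  note V' = mp[OF spec[OF bspec[OF VS0 k'K]] UU']
  have C3': "CEnt M ?b (Qall N Q k' U') F = 0" by (rule V'[THEN conjunct2, THEN conjunct2, THEN conjunct1])
  have C7': "MI M ?b (Wbar K L W k') (\<lambda>\<omega>. (F \<omega>, Qall N A k' U' \<omega>, RSub U' RS \<omega>)) = 0" by (rule V'[THEN conjunct2, THEN conjunct2, THEN conjunct2, THEN conjunct2, THEN conjunct2, THEN conjunct2, THEN conjunct1])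
  let ?Qk = "Q n k U" let ?Ak = "A n k U" let ?Wa = "Wall K L W" let ?R = "RSub I RS" let ?RU = "RSub U RS"
  let ?Wk = "Wmsg L W k" let ?Wb = "Wbar K L W k" let ?Aa = "Qall N A k U" let ?Qa = "Qall N Q k U"
  let ?Qk' = "Q n k' U'" let ?Ak' = "A n k' U'" let ?RU' = "RSub U' RS"
  let ?Wb' = "Wbar K L W k'" let ?Aa' = "Qall N A k' U'" let ?Qa' = "Qall N Q k' U'"
  have dRU: "\<And>\<omega> \<omega>'. ?R \<omega> = ?R \<omega>' \<Longrightarrow> ?RU \<omega> = ?RU \<omega>'" by (rule depRU[OF _ UI])
  have dA: "\<And>\<omega> \<omega>'. ?Aa \<omega> = ?Aa \<omega>' \<Longrightarrow> ?Ak \<omega> = ?Ak \<omega>'" by (rule depQall[OF _ nN])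
  have dQ: "\<And>\<omega> \<omega>'. ?Qa \<omega> = ?Qa \<omega>' \<Longrightarrow> ?Qk \<omega> = ?Qk \<omega>'" by (rule depQall[OF _ nN])
  have dA': "\<And>\<omega> \<omega>'. ?Aa' \<omega> = ?Aa' \<omega>' \<Longrightarrow> ?Ak' \<omega> = ?Ak' \<omega>'" by (rule depQall[OF _ nN])
  have dQ': "\<And>\<omega> \<omega>'. ?Qa' \<omega> = ?Qa' \<omega>' \<Longrightarrow> ?Qk' \<omega> = ?Qk' \<omega>'" by (rule depQall[OF _ nN])
  have dWk: "\<And>\<omega> \<omega>'. ?Wa \<omega> = ?Wa \<omega>' \<Longrightarrow> ?Wk \<omega> = ?Wk \<omega>'" by (rule depWk[OF _ kK])
  have dWb: "\<And>\<omega> \<omega>'. ?Wa \<omega> = ?Wa \<omega>' \<Longrightarrow> ?Wb \<omega> = ?Wb \<omega>'" by (rule depWb)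
  have dW: "\<And>\<omega> \<omega>'. ?Wk \<omega> = ?Wk \<omega>' \<Longrightarrow> ?Wb \<omega> = ?Wb \<omega>' \<Longrightarrow> ?Wa \<omega> = ?Wa \<omega>'" by (rule recon)
  have dWbk: "\<And>\<omega> \<omega>'. ?Wb' \<omega> = ?Wb' \<omega>' \<Longrightarrow> ?Wk \<omega> = ?Wk \<omega>'" by (rule depWbk[OF _ kk' kK])

  have C3h: "Ent M ?b (\<lambda>\<omega>. (?Qa \<omega>, F \<omega>)) = Ent M ?b (F)" using C3 by (simp add: CEnt_def CE_h Ent_def)
  have C3h': "Ent M ?b (\<lambda>\<omega>. (?Qa' \<omega>, F \<omega>)) = Ent M ?b (F)" using C3' by (simp add: CEnt_def CE_h Ent_def)
  have E2: "Ent M ?b (\<lambda>\<omega>. (?Ak \<omega>, ?Qk \<omega>, ?Wa \<omega>, ?R \<omega>)) = Ent M ?b (\<lambda>\<omega>. (?Qk \<omega>, ?Wa \<omega>, ?R \<omega>))"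
    using C4 by (simp add: CEnt_def CE_h Ent_def)
  have C5h: "Ent M ?b (\<lambda>\<omega>. (?Wk \<omega>, F \<omega>, ?Aa \<omega>, ?RU \<omega>)) = Ent M ?b (\<lambda>\<omega>. (F \<omega>, ?Aa \<omega>, ?RU \<omega>))"
    using C5 by (simp add: CEnt_def CE_h Ent_def)
  have C7h: "Ent M ?b (?Wb) + Ent M ?b (\<lambda>\<omega>. (F \<omega>, ?Aa \<omega>, ?RU \<omega>)) - Ent M ?b (\<lambda>\<omega>. (?Wb \<omega>, F \<omega>, ?Aa \<omega>, ?RU \<omega>)) = 0"
    using C7 by (simp add: MI_def MI_h Ent_def)
  have C7h': "Ent M ?b (?Wb') + Ent M ?b (\<lambda>\<omega>. (F \<omega>, ?Aa' \<omega>, ?RU' \<omega>)) - Ent M ?b (\<lambda>\<omega>. (?Wb' \<omega>, F \<omega>, ?Aa' \<omega>, ?RU' \<omega>)) = 0"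
    using C7' by (simp add: MI_def MI_h Ent_def)

  have goal: "CEnt M ?b ?Ak (\<lambda>\<omega>. (?Qk \<omega>, ?RU \<omega>)) = Ent M ?b (\<lambda>\<omega>. (?Ak \<omega>, ?Qk \<omega>, ?RU \<omega>)) - Ent M ?b (\<lambda>\<omega>. (?Qk \<omega>, ?RU \<omega>))"
    by (simp add: CEnt_def CE_h Ent_def)
  have goal2: "Ent M ?b ?R = Ent M ?b (?R)" by (simp add: Ent_def)

  note sm = submod[folded Ent_def] and sa = subadd[folded Ent_def] and mo = mono[folded Ent_def]
  note el = ent_le[folded Ent_def] and ee = ent_eq[folded Ent_def] and dc = det_cond[folded Ent_def]
  note cm = condmono[folded Ent_def] and mim = MI_mono[folded Ent_def] and tr = transfer[folded Ent_def]
  note ec = ent_cong[folded Ent_def]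

  have E1: "Ent M ?b (\<lambda>\<omega>. (?Ak \<omega>, ?Qk \<omega>, ?RU \<omega>, ?Wa \<omega>)) \<le> Ent M ?b (\<lambda>\<omega>. (?Ak \<omega>, ?Qk \<omega>, ?Wa \<omega>, ?R \<omega>))"
    by (rule el) (auto dest: dRU)
  have E3: "Ent M ?b (\<lambda>\<omega>. (?R \<omega>, (?Qk \<omega>, ?Wa \<omega>), ?RU \<omega>)) + Ent M ?b ?RU
     \<le> Ent M ?b (\<lambda>\<omega>. (?R \<omega>, ?RU \<omega>)) + Ent M ?b (\<lambda>\<omega>. ((?Qk \<omega>, ?Wa \<omega>), ?RU \<omega>))"
    by (rule sm)
  have E3a: "Ent M ?b (\<lambda>\<omega>. (?R \<omega>, (?Qk \<omega>, ?Wa \<omega>), ?RU \<omega>)) = Ent M ?b (\<lambda>\<omega>. (?Qk \<omega>, ?Wa \<omega>, ?R \<omega>))"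
    by (rule ee) (auto dest: dRU)
  have E3b: "Ent M ?b (\<lambda>\<omega>. (?R \<omega>, ?RU \<omega>)) = Ent M ?b ?R"
    by (rule ee) (auto dest: dRU)
  have E4: "Ent M ?b (\<lambda>\<omega>. (?Wa \<omega>, (?Qk \<omega>, ?RU \<omega>))) \<le> Ent M ?b ?Wa + Ent M ?b (\<lambda>\<omega>. (?Qk \<omega>, ?RU \<omega>))"
    by (rule sa)
  have E4a: "Ent M ?b (\<lambda>\<omega>. ((?Qk \<omega>, ?Wa \<omega>), ?RU \<omega>)) = Ent M ?b (\<lambda>\<omega>. (?Wa \<omega>, (?Qk \<omega>, ?RU \<omega>)))"
    by (rule ee) auto
  have E5: "Ent M ?b ?Wa \<le> Ent M ?b (\<lambda>\<omega>. (?Wk \<omega>, ?Wb \<omega>))"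
    by (rule el) (auto intro: dW)
  have E6: "Ent M ?b (\<lambda>\<omega>. (?Wb \<omega>, ?Wk \<omega>, ?Ak \<omega>, ?Qk \<omega>, ?RU \<omega>)) \<le> Ent M ?b (\<lambda>\<omega>. (?Ak \<omega>, ?Qk \<omega>, ?RU \<omega>, ?Wa \<omega>))"
    by (rule el) (auto dest: dWk dWb)
  have E7: "Ent M ?b (\<lambda>\<omega>. (?Wk \<omega>, ?Wb \<omega>)) \<le> Ent M ?b ?Wk + Ent M ?b ?Wb"
    by (rule sa)
  have E8: "Ent M ?b (\<lambda>\<omega>. (?Wb \<omega>, (?Qa \<omega>, ?Wk \<omega>, F \<omega>, ?Aa \<omega>, ?RU \<omega>))) - Ent M ?b (\<lambda>\<omega>. (?Qa \<omega>, ?Wk \<omega>, F \<omega>, ?Aa \<omega>, ?RU \<omega>))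
     \<le> Ent M ?b (\<lambda>\<omega>. (?Wb \<omega>, (?Wk \<omega>, ?Ak \<omega>, ?Qk \<omega>, ?RU \<omega>))) - Ent M ?b (\<lambda>\<omega>. (?Wk \<omega>, ?Ak \<omega>, ?Qk \<omega>, ?RU \<omega>))"
    by (rule cm) (auto dest: dA dQ)
  have D1: "Ent M ?b (\<lambda>\<omega>. ((?Wb \<omega>, ?Wk \<omega>, ?Aa \<omega>, ?RU \<omega>), ?Qa \<omega>, F \<omega>)) = Ent M ?b (\<lambda>\<omega>. ((?Wb \<omega>, ?Wk \<omega>, ?Aa \<omega>, ?RU \<omega>), F \<omega>))"
    by (rule dc[OF C3h])
  have D1': "Ent M ?b (\<lambda>\<omega>. ((?Wk \<omega>, ?Aa \<omega>, ?RU \<omega>), ?Qa \<omega>, F \<omega>)) = Ent M ?b (\<lambda>\<omega>. ((?Wk \<omega>, ?Aa \<omega>, ?RU \<omega>), F \<omega>))"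
    by (rule dc[OF C3h])
  have D2: "Ent M ?b (\<lambda>\<omega>. (?Wb \<omega>, ?Wk \<omega>, F \<omega>, ?Aa \<omega>, ?RU \<omega>)) = Ent M ?b (\<lambda>\<omega>. (?Wb \<omega>, F \<omega>, ?Aa \<omega>, ?RU \<omega>))"
    by (rule dc[OF C5h])
  have D1e: "Ent M ?b (\<lambda>\<omega>. (?Wb \<omega>, (?Qa \<omega>, ?Wk \<omega>, F \<omega>, ?Aa \<omega>, ?RU \<omega>))) = Ent M ?b (\<lambda>\<omega>. ((?Wb \<omega>, ?Wk \<omega>, ?Aa \<omega>, ?RU \<omega>), ?Qa \<omega>, F \<omega>))"
    by (rule ee) auto
  have D1f: "Ent M ?b (\<lambda>\<omega>. ((?Wb \<omega>, ?Wk \<omega>, ?Aa \<omega>, ?RU \<omega>), F \<omega>)) = Ent M ?b (\<lambda>\<omega>. (?Wb \<omega>, ?Wk \<omega>, F \<omega>, ?Aa \<omega>, ?RU \<omega>))"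
    by (rule ee) auto
  have D1e': "Ent M ?b (\<lambda>\<omega>. (?Qa \<omega>, ?Wk \<omega>, F \<omega>, ?Aa \<omega>, ?RU \<omega>)) = Ent M ?b (\<lambda>\<omega>. ((?Wk \<omega>, ?Aa \<omega>, ?RU \<omega>), ?Qa \<omega>, F \<omega>))"
    by (rule ee) auto
  have D1f': "Ent M ?b (\<lambda>\<omega>. ((?Wk \<omega>, ?Aa \<omega>, ?RU \<omega>), F \<omega>)) = Ent M ?b (\<lambda>\<omega>. (?Wk \<omega>, F \<omega>, ?Aa \<omega>, ?RU \<omega>))"
    by (rule ee) auto
  have E9: "Ent M ?b (\<lambda>\<omega>. ((?Ak \<omega>, ?Qk \<omega>), ?RU \<omega>)) \<le> Ent M ?b (\<lambda>\<omega>. (?Ak \<omega>, ?Qk \<omega>)) + Ent M ?b ?RU"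
    by (rule sa)
  have E9a: "Ent M ?b (\<lambda>\<omega>. ((?Ak \<omega>, ?Qk \<omega>), ?RU \<omega>)) = Ent M ?b (\<lambda>\<omega>. (?Ak \<omega>, ?Qk \<omega>, ?RU \<omega>))"
    by (rule ee) auto
  have E9b: "Ent M ?b (\<lambda>\<omega>. (?Wk \<omega>, ?Ak \<omega>, ?Qk \<omega>)) \<le> Ent M ?b (\<lambda>\<omega>. (?RU \<omega>, (?Wk \<omega>, ?Ak \<omega>, ?Qk \<omega>)))"
    by (rule mo)
  have E9c: "Ent M ?b (\<lambda>\<omega>. (?RU \<omega>, (?Wk \<omega>, ?Ak \<omega>, ?Qk \<omega>))) = Ent M ?b (\<lambda>\<omega>. (?Wk \<omega>, ?Ak \<omega>, ?Qk \<omega>, ?RU \<omega>))"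
    by (rule ee) auto
  have T1: "Ent M ?b (\<lambda>\<omega>. (?Ak \<omega>, ?Qk \<omega>)) = Ent M ?b (\<lambda>\<omega>. (?Ak' \<omega>, ?Qk' \<omega>))"
    using tr[OF C6, of "\<lambda>(q,a,w,r). (a,q)"] by simp
  have T2: "Ent M ?b (\<lambda>\<omega>. (?Wa \<omega> ! (k-1), ?Ak \<omega>, ?Qk \<omega>)) = Ent M ?b (\<lambda>\<omega>. (?Wa \<omega> ! (k-1), ?Ak' \<omega>, ?Qk' \<omega>))"
    using tr[OF C6, of "\<lambda>(q,a,w,r). (w ! (k-1), a, q)"] by simp
  have T2a: "Ent M ?b (\<lambda>\<omega>. (?Wa \<omega> ! (k-1), ?Ak \<omega>, ?Qk \<omega>)) = Ent M ?b (\<lambda>\<omega>. (?Wk \<omega>, ?Ak \<omega>, ?Qk \<omega>))"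
    by (rule ec) (simp add: Wk_nth[OF kK])
  have T2b: "Ent M ?b (\<lambda>\<omega>. (?Wa \<omega> ! (k-1), ?Ak' \<omega>, ?Qk' \<omega>)) = Ent M ?b (\<lambda>\<omega>. (?Wk \<omega>, ?Ak' \<omega>, ?Qk' \<omega>))"
    by (rule ec) (simp add: Wk_nth[OF kK])
  have W1: "Ent M ?b ?Wk + Ent M ?b (\<lambda>\<omega>. (?Ak' \<omega>, ?Qk' \<omega>)) - Ent M ?b (\<lambda>\<omega>. (?Wk \<omega>, ?Ak' \<omega>, ?Qk' \<omega>))
     \<le> Ent M ?b ?Wb' + Ent M ?b (\<lambda>\<omega>. ((?Aa' \<omega>, ?RU' \<omega>), ?Qa' \<omega>, F \<omega>)) - Ent M ?b (\<lambda>\<omega>. (?Wb' \<omega>, ((?Aa' \<omega>, ?RU' \<omega>), ?Qa' \<omega>, F \<omega>)))"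
    by (rule mim) (auto dest: dA' dQ' dWbk)
  have D3: "Ent M ?b (\<lambda>\<omega>. ((?Wb' \<omega>, ?Aa' \<omega>, ?RU' \<omega>), ?Qa' \<omega>, F \<omega>)) = Ent M ?b (\<lambda>\<omega>. ((?Wb' \<omega>, ?Aa' \<omega>, ?RU' \<omega>), F \<omega>))"
    by (rule dc[OF C3h'])
  have D3': "Ent M ?b (\<lambda>\<omega>. ((?Aa' \<omega>, ?RU' \<omega>), ?Qa' \<omega>, F \<omega>)) = Ent M ?b (\<lambda>\<omega>. ((?Aa' \<omega>, ?RU' \<omega>), F \<omega>))"
    by (rule dc[OF C3h'])
  have D3e: "Ent M ?b (\<lambda>\<omega>. (?Wb' \<omega>, ((?Aa' \<omega>, ?RU' \<omega>), ?Qa' \<omega>, F \<omega>))) = Ent M ?b (\<lambda>\<omega>. ((?Wb' \<omega>, ?Aa' \<omega>, ?RU' \<omega>), ?Qa' \<omega>, F \<omega>))"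
    by (rule ee) auto
  have D3f: "Ent M ?b (\<lambda>\<omega>. ((?Wb' \<omega>, ?Aa' \<omega>, ?RU' \<omega>), F \<omega>)) = Ent M ?b (\<lambda>\<omega>. (?Wb' \<omega>, F \<omega>, ?Aa' \<omega>, ?RU' \<omega>))"
    by (rule ee) auto
  have D3f': "Ent M ?b (\<lambda>\<omega>. ((?Aa' \<omega>, ?RU' \<omega>), F \<omega>)) = Ent M ?b (\<lambda>\<omega>. (F \<omega>, ?Aa' \<omega>, ?RU' \<omega>))"
    by (rule ee) auto
  have S1: "Ent M ?b (\<lambda>\<omega>. (?Ak \<omega>, ?Qk \<omega>)) + Ent M ?b ?Wk - Ent M ?b (\<lambda>\<omega>. (?Wk \<omega>, ?Ak \<omega>, ?Qk \<omega>)) \<le> 0"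
    using T1 T2 T2a T2b W1 D3 D3' D3e D3f D3f' C7h' by linarith
  have S2: "Ent M ?b ?Wb \<le> Ent M ?b (\<lambda>\<omega>. (?Wb \<omega>, ?Wk \<omega>, ?Ak \<omega>, ?Qk \<omega>, ?RU \<omega>)) - Ent M ?b (\<lambda>\<omega>. (?Wk \<omega>, ?Ak \<omega>, ?Qk \<omega>, ?RU \<omega>))"
    using E8 C5h C7h D1 D1' D2 D1e D1f D1e' D1f' by linarith
  have S3: "Ent M ?b (\<lambda>\<omega>. (?Ak \<omega>, ?Qk \<omega>, ?RU \<omega>, ?Wa \<omega>)) \<le> Ent M ?b ?R - Ent M ?b ?RU + Ent M ?b ?Wa + Ent M ?b (\<lambda>\<omega>. (?Qk \<omega>, ?RU \<omega>))"
    using E1 E2 E3 E3a E3b E4 E4a by linarith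
  have S4: "Ent M ?b (\<lambda>\<omega>. (?Ak \<omega>, ?Qk \<omega>, ?RU \<omega>)) + Ent M ?b ?Wk - Ent M ?b (\<lambda>\<omega>. (?Wk \<omega>, ?Ak \<omega>, ?Qk \<omega>, ?RU \<omega>)) \<le> Ent M ?b ?RU"
    using S1 E9 E9a E9b E9c by linarith
  show ?thesis
    unfolding goal using S2 S3 S4 E5 E6 E7 by linarith
qed
end
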